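(* Let $G$ be a graph, $X_C \subseteq V(G)$, $z \geq 0$, and let $H$ be an $X_C$-certificate of order $z$ in $G$. Let $D$ be a connected component of $H - X_C$, let $H'$ be the connected component of $H$ containing $D$, and let $X_C' := X_C \cap V(H')$. Suppose that: (1) for each $x \in X_C'$ such that $H[\{x\} \cup V(D)]$ contains an odd cycle, there are at least $z$ connected components $D' \neq D$ of $H - X_C$ such that $H[\{x\} \cup V(D')]$ contains an odd cycle; and (2) for each pair of distinct $x, y \in X_C'$ and each parity $p \in \{0,1\}$, if $H[\{x,y\} \cup V(D)]$ contains an $(x,y)$-path of length congruent to $p$ modulo $2$, then there are at least $z$ connected components $D' \neq D$ of $H - X_C$ such that $H[\{x,y\} \cup V(D')]$ contains an $(x,y)$-path of length congruent to $p$ modulo $2$. Then $\mathrm{oct}(H) = \mathrm{oct}(H - V(D))$.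
   Context: $\mathrm{oct}(H)$ denotes the minimum size of a set $S\subseteq V(H)$ with $H - S$ bipartite. For $X_C \subseteq V(G)$, an $X_C$-certificate of order $z$ is a subgraph $H$ of $G$ such that $H - X_C$ is bipartite, $\mathrm{oct}(H)=|X_C|$, and each connected component $H'$ of $H$ has $|X_C\cap V(H')|\le z$. *)

theory Defs
  imports Main
begin

type_synonym 'a graph = "'a set \<times> 'a set set"

definition verts :: "'a graph \<Rightarrow> 'a set" where "verts G = fst G"
definition edges :: "'a graph \<Rightarrow> 'a set set" where "edges G = snd G"

definition wf_graph :: "'a graph \<Rightarrow> bool" where
  "wf_graph G \<longleftrightarrow> finite (verts G) \<and> (\<forall>e\<in>edges G. e \<subseteq> verts G \<and> card e = 2)"

definition adj :: "'a graph \<Rightarrow> 'a \<Rightarrow> 'a \<Rightarrow> bool" where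
  "adj G u v \<longleftrightarrow> {u, v} \<in> edges G"

definition subgraph :: "'a graph \<Rightarrow> 'a graph \<Rightarrow> bool" where
  "subgraph H G \<longleftrightarrow> wf_graph H \<and> verts H \<subseteq> verts G \<and> edges H \<subseteq> edges G"

definition induced :: "'a graph \<Rightarrow> 'a set \<Rightarrow> 'a graph" where
  "induced G S = (verts G \<inter> S, {e \<in> edges G. e \<subseteq> S})"

definition delete :: "'a graph \<Rightarrow> 'a set \<Rightarrow> 'a graph" where
  "delete G S = induced G (verts G - S)"

definition bipartite :: "'a graph \<Rightarrow> bool" where
  "bipartite G \<longleftrightarrow> (\<exists>A. \<forall>e\<in>edges G. card (e \<inter> A) = 1)"

definition oct :: "'a graph \<Rightarrow> nat" where
  "oct G = (LEAST k. \<exists>S. S \<subseteq> verts G \<and> card S = k \<and> bipartite (delete G S))"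

definition is_path :: "'a graph \<Rightarrow> 'a list \<Rightarrow> bool" where
  "is_path G xs \<longleftrightarrow> xs \<noteq> [] \<and> distinct xs \<and> set xs \<subseteq> verts G \<and>
     (\<forall>i. Suc i < length xs \<longrightarrow> adj G (xs ! i) (xs ! Suc i))"

definition has_path_parity :: "'a graph \<Rightarrow> 'a \<Rightarrow> 'a \<Rightarrow> nat \<Rightarrow> bool" where
  "has_path_parity G x y p \<longleftrightarrow>
     (\<exists>xs. is_path G xs \<and> hd xs = x \<and> last xs = y \<and> (length xs - 1) mod 2 = p)"

definition is_cycle :: "'a graph \<Rightarrow> 'a list \<Rightarrow> bool" where
  "is_cycle G xs \<longleftrightarrow> length xs \<ge> 3 \<and> is_path G xs \<and> adj G (last xs) (hd xs)"

definition has_odd_cycle :: "'a graph \<Rightarrow> bool" where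
  "has_odd_cycle G \<longleftrightarrow> (\<exists>xs. is_cycle G xs \<and> odd (length xs))"

definition reach :: "'a graph \<Rightarrow> 'a \<Rightarrow> 'a \<Rightarrow> bool" where
  "reach G = (\<lambda>u v. u \<in> verts G \<and> v \<in> verts G \<and> adj G u v)\<^sup>*\<^sup>*"

definition component :: "'a graph \<Rightarrow> 'a set \<Rightarrow> bool" where
  "component G C \<longleftrightarrow> (\<exists>u\<in>verts G. C = {v. reach G u v})"

definition certificate :: "'a graph \<Rightarrow> 'a set \<Rightarrow> nat \<Rightarrow> 'a graph \<Rightarrow> bool" where
  "certificate G XC z H \<longleftrightarrow> subgraph H G \<and> bipartite (delete H XC) \<and> oct H = card XC \<and>
     (\<forall>C. component H C \<longrightarrow> card (XC \<inter> C) \<le> z)"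

end

theory Submission
  imports Defs
begin


lemma chain_iff: "(\<forall>i. Suc i < length xs \<longrightarrow> P (xs!i) (xs!Suc i)) \<longleftrightarrow> successively P xs"
proof (induction P xs rule: successively.induct)
  case (3 P x y xs)
  have "(\<forall>i. Suc i < length (x#y#xs) \<longrightarrow> P ((x#y#xs)!i) ((x#y#xs)!Suc i)) \<longleftrightarrow>
        P x y \<and> (\<forall>i. Suc i < length (y#xs) \<longrightarrow> P ((y#xs)!i) ((y#xs)!Suc i))"
  proof safe
    fix i assume "\<forall>i. Suc i < length (x#y#xs) \<longrightarrow> P ((x#y#xs)!i) ((x#y#xs)!Suc i)" "Suc i < length (y#xs)"
    then show "P ((y#xs)!i) ((y#xs)!Suc i)" by (metis Suc_less_eq length_Cons nth_Cons_Suc)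
  next
    fix i assume "P x y" "\<forall>i. Suc i < length (y#xs) \<longrightarrow> P ((y#xs)!i) ((y#xs)!Suc i)" "Suc i < length (x#y#xs)"
    then show "P ((x#y#xs)!i) ((x#y#xs)!Suc i)" by (cases i) auto
  qed auto
  then show ?case using 3 by simp
qed auto

lemma is_path_succ: "is_path G xs \<longleftrightarrow> xs \<noteq> [] \<and> distinct xs \<and> set xs \<subseteq> verts G \<and> successively (adj G) xs"
  unfolding is_path_def chain_iff by simp

lemma two_color: "u \<noteq> v \<Longrightarrow> card ({u,v} \<inter> X) = 1 \<longleftrightarrow> (u\<in>X) \<noteq> (v\<in>X)"
  by (cases "u\<in>X"; cases "v\<in>X") auto

lemma adj_sym: "adj G u v \<longleftrightarrow> adj G v u"
  unfolding adj_def by (simp add: insert_commute)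

lemma walk_parity_aux:
  assumes "\<forall>e\<in>edges G. card e = 2 \<and> card (e \<inter> A) = 1"
  shows "successively (adj G) xs \<Longrightarrow> xs \<noteq> [] \<Longrightarrow> (hd xs \<in> A \<longleftrightarrow> last xs \<in> A) \<longleftrightarrow> even (length xs - 1)"
proof (induction xs)
  case Nil then show ?case by simp
next
  case (Cons x xs)
  show ?case
  proof (cases "xs = []")
    case True then show ?thesis by simp
  next
    case False
    then obtain y ys where xs: "xs = y # ys" by (cases xs) auto
    have a: "adj G x y" and s: "successively (adj G) xs" using Cons.prems(1) xs by auto
    have e: "{x,y} \<in> edges G" using a unfolding adj_def .
    have c: "card {x,y} = 2" "card ({x,y} \<inter> A) = 1" using bspec[OF assms e] by auto
    have xy: "x \<noteq> y" using c(1) by (cases "x = y") auto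
    have d: "(x\<in>A) \<noteq> (y\<in>A)" using two_color[OF xy] c(2) by simp
    have ih: "(hd xs \<in> A \<longleftrightarrow> last xs \<in> A) \<longleftrightarrow> even (length xs - 1)"
      using Cons.IH[OF s False] .
    show ?thesis using d ih xs by (cases "ys = []") auto
  qed
qed

lemma walk_parity:
  assumes "successively (adj G) xs" "\<forall>e\<in>edges G. card e = 2 \<and> card (e \<inter> A) = 1" "xs \<noteq> []"
  shows "(hd xs \<in> A \<longleftrightarrow> last xs \<in> A) \<longleftrightarrow> even (length xs - 1)"
  using walk_parity_aux[OF assms(2) assms(1,3)] .

lemma reach_sym: "reach G u v \<Longrightarrow> reach G v u"
proof -
  have "symp (\<lambda>u v. u \<in> verts G \<and> v \<in> verts G \<and> adj G u v)"
    by (auto simp: symp_def adj_sym)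
  then show "reach G u v \<Longrightarrow> reach G v u" unfolding reach_def
    by (metis sympD symp_rtranclp)
qed

lemma reach_trans: "reach G u v \<Longrightarrow> reach G v w \<Longrightarrow> reach G u w"
  unfolding reach_def by simp

lemma component_eq: assumes "component G C" "v \<in> C" shows "C = {y. reach G v y}"
proof -
  obtain u where u: "C = {y. reach G u y}" using assms(1) unfolding component_def by blast
  then have uv: "reach G u v" using assms(2) by blast
  show ?thesis
  proof (intro set_eqI iffI)
    fix y assume "y \<in> C" then have "reach G u y" using u by blast
    then show "y \<in> {y. reach G v y}" using reach_trans[OF reach_sym[OF uv]] by blast
  next
    fix y assume "y \<in> {y. reach G v y}" then have "reach G v y" by blast
    then show "y \<in> C" using reach_trans[OF uv] u by blast
  qed
qed

lemma component_disj: "component G C1 \<Longrightarrow> component G C2 \<Longrightarrow> C1 \<noteq> C2 \<Longrightarrow> C1 \<inter> C2 = {}"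
proof (rule ccontr)
  assume a: "component G C1" "component G C2" "C1 \<noteq> C2" "C1 \<inter> C2 \<noteq> {}"
  then obtain v where "v \<in> C1" "v \<in> C2" by blast
  then show False using a component_eq by metis
qed

lemma reach_verts: "reach G u v \<Longrightarrow> u \<in> verts G \<Longrightarrow> v \<in> verts G"
  unfolding reach_def by (induction rule: rtranclp_induct) auto

lemma component_verts: assumes "component G C" shows "C \<subseteq> verts G"
proof
  obtain u where u: "u \<in> verts G" "C = {y. reach G u y}" using assms(1) unfolding component_def by blast
  fix y assume "y \<in> C" then have "reach G u y" using u by blast
  then show "y \<in> verts G" by (rule reach_verts[OF _ u(1)])
qed

lemma component_closed: "component G C \<Longrightarrow> u \<in> C \<Longrightarrow> u \<in> verts G \<Longrightarrow> v \<in> verts G \<Longrightarrow> adj G u v \<Longrightarrow> v \<in> C"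
  unfolding component_def reach_def by (auto intro: rtranclp.rtrancl_into_rtrancl)

lemma successively_take: "successively P xs \<Longrightarrow> successively P (take n xs)"
  by (metis append_take_drop_id successively_append_iff)

lemma dist_walk:
  assumes "R\<^sup>*\<^sup>* a b"
  shows "\<exists>xs. xs \<noteq> [] \<and> hd xs = a \<and> last xs = b \<and> successively R xs \<and> distinct xs \<and> (\<forall>v\<in>set xs. R\<^sup>*\<^sup>* a v)"
  using assms
proof (induction rule: rtranclp_induct)
  case base
  then show ?case by (intro exI[of _ "[a]"]) auto
next
  case (step b c)
  then obtain xs where xs: "xs \<noteq> []" "hd xs = a" "last xs = b" "successively R xs" "distinct xs" "\<forall>v\<in>set xs. R\<^sup>*\<^sup>* a v"
    by blast
  show ?case
  proof (cases "c \<in> set xs")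
    case True
    then obtain k where k: "k < length xs" "xs!k = c" by (metis in_set_conv_nth)
    have t: "take (Suc k) xs = take k xs @ [c]" using k by (simp add: take_Suc_conv_app_nth)
    have d: "distinct (take (Suc k) xs)" using xs(5) by simp
    have h: "hd (take (Suc k) xs) = a" using xs(1,2) by (simp add: hd_take)
    have l: "last (take (Suc k) xs) = c" using t by simp
    have s: "set (take (Suc k) xs) \<subseteq> set xs" by (rule set_take_subset)
    show ?thesis
      apply (intro exI[of _ "take (Suc k) xs"])
      using xs d h l s successively_take[OF xs(4), of "Suc k"] by auto
  next
    case False
    then show ?thesis
      apply (intro exI[of _ "xs @ [c]"])
      using xs step by (auto simp: successively_append_iff intro: rtranclp.rtrancl_into_rtrancl)
  qed
qed

lemma walk_closed:
  assumes "successively R xs" "\<forall>u v. R u v \<longrightarrow> (u\<in>C \<longleftrightarrow> v\<in>C)" "\<exists>y\<in>set xs. y\<in>C"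
  shows "set xs \<subseteq> C"
  using assms by (induction R xs rule: successively.induct) auto

lemma verts_induced[simp]: "verts (induced G T) = verts G \<inter> T"
  by (simp add: induced_def verts_def)
lemma edges_induced[simp]: "edges (induced G T) = {e\<in>edges G. e \<subseteq> T}"
  by (simp add: induced_def edges_def)
lemma verts_delete[simp]: "verts (delete G X) = verts G - X"
  by (auto simp: delete_def)
lemma edges_delete[simp]: "edges (delete G X) = {e\<in>edges G. e \<subseteq> verts G - X}"
  by (auto simp: delete_def)
lemma adj_induced[simp]: "adj (induced G T) u v \<longleftrightarrow> adj G u v \<and> u \<in> T \<and> v \<in> T"
  by (auto simp: adj_def)
lemma adj_delete[simp]: "adj (delete G X) u v \<longleftrightarrow> adj G u v \<and> u \<in> verts G - X \<and> v \<in> verts G - X"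
  by (auto simp: adj_def)

lemma wf_adj: assumes "wf_graph G" "adj G u v" shows "u \<in> verts G \<and> v \<in> verts G \<and> u \<noteq> v"
proof -
  have e: "{u,v} \<in> edges G" using assms(2) unfolding adj_def .
  have "{u,v} \<subseteq> verts G" "card {u,v} = 2" using assms(1) e unfolding wf_graph_def by auto
  then show ?thesis by (cases "u = v") auto
qed

lemma wf_delete: "wf_graph G \<Longrightarrow> wf_graph (delete G X)"
  unfolding wf_graph_def by auto

lemma octI: "S \<subseteq> verts G \<Longrightarrow> bipartite (delete G S) \<Longrightarrow> oct G \<le> card S"
  unfolding oct_def by (rule Least_le) blast

lemma octE: assumes "wf_graph G"
  shows "\<exists>S. S \<subseteq> verts G \<and> card S = oct G \<and> bipartite (delete G S)"
proof -
  have "bipartite (delete G (verts G))"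
    using assms unfolding bipartite_def wf_graph_def by fastforce
  then have "\<exists>S. S \<subseteq> verts G \<and> card S = card (verts G) \<and> bipartite (delete G S)" by blast
  then have "\<exists>k. \<exists>S. S \<subseteq> verts G \<and> card S = k \<and> bipartite (delete G S)" by blast
  from LeastI_ex[OF this] show ?thesis unfolding oct_def .
qed

lemma oct_mono: assumes "wf_graph G" shows "oct (delete G D) \<le> oct G"
proof -
  obtain T where T: "T \<subseteq> verts G" "card T = oct G" "bipartite (delete G T)" using octE[OF assms] by blast
  have fin: "finite T" using T(1) assms unfolding wf_graph_def by (meson finite_subset)
  let ?T = "T \<inter> verts (delete G D)"
  have "bipartite (delete (delete G D) ?T)"
  proof -
    obtain A where "\<forall>e\<in>edges (delete G T). card (e \<inter> A) = 1" using T(3) unfolding bipartite_def by blast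
    then show ?thesis unfolding bipartite_def by (intro exI[of _ A]) auto
  qed
  then have "oct (delete G D) \<le> card ?T" by (intro octI) auto
  also have "\<dots> \<le> card T" using fin by (simp add: card_mono)
  finally show ?thesis using T(2) by simp
qed



lemma oddcyc_contra:
  assumes "successively (adj G) zs" "adj G (last zs) (hd zs)"
    "\<forall>e\<in>edges G. card e = 2 \<and> card (e \<inter> A) = 1" "odd (length zs)" "zs \<noteq> []"
  shows False
proof -
  have "(hd zs \<in> A \<longleftrightarrow> last zs \<in> A) \<longleftrightarrow> even (length zs - 1)"
    using walk_parity[OF assms(1,3,5)] .
  moreover have "even (length zs - 1)" using assms(4,5) by (cases zs; auto)
  moreover have e: "{last zs, hd zs} \<in> edges G" using assms(2) by (simp add: adj_def)
  have c: "card {last zs, hd zs} = 2" "card ({last zs, hd zs} \<inter> A) = 1" using bspec[OF assms(3) e] by auto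
  have xy: "last zs \<noteq> hd zs" using c(1) by (cases "last zs = hd zs"; auto)
  have "(last zs \<in> A) \<noteq> (hd zs \<in> A)" using two_color[OF xy] c(2) by simp
  ultimately show False by simp
qed

theorem mainTheorem7:
  fixes G H :: "'a graph" and XC D H' :: "'a set" and z :: nat
  assumes "wf_graph G"
    and "XC \<subseteq> verts G"
    and "certificate G XC z H"
    and "component (delete H XC) D"
    and "component H H'" and "D \<subseteq> H'"
    and "\<forall>x\<in>XC \<inter> H'. has_odd_cycle (induced H ({x} \<union> D)) \<longrightarrow>
           card {D'. component (delete H XC) D' \<and> D' \<noteq> D \<and>
                      has_odd_cycle (induced H ({x} \<union> D'))} \<ge> z"
    and "\<forall>x\<in>XC \<inter> H'. \<forall>y\<in>XC \<inter> H'. \<forall>p\<in>{0, 1::nat}. x \<noteq> y \<longrightarrow>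
           has_path_parity (induced H ({x, y} \<union> D)) x y p \<longrightarrow>
           card {D'. component (delete H XC) D' \<and> D' \<noteq> D \<and>
                      has_path_parity (induced H ({x, y} \<union> D')) x y p} \<ge> z"
  shows "oct H = oct (delete H D)"
proof -
  have subH: "subgraph H G" and bipXC: "bipartite (delete H XC)" and octH: "oct H = card XC"
    and compz: "\<forall>C. component H C \<longrightarrow> card (XC \<inter> C) \<le> z"
    using assms(3) unfolding certificate_def by auto
  have wfH: "wf_graph H" using subH unfolding subgraph_def by auto
  have finH: "finite (verts H)" using wfH unfolding wf_graph_def by auto
  obtain B where B: "\<forall>e\<in>edges (delete H XC). card (e \<inter> B) = 1" using bipXC unfolding bipartite_def by blast
  have wf1: "\<forall>e\<in>edges (delete H XC). card e = 2 \<and> card (e\<inter>B) = 1"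
    using B wfH unfolding wf_graph_def by auto
  have Dv: "D \<subseteq> verts H - XC" using component_verts[OF assms(4)] by simp
  have H'v: "H' \<subseteq> verts H" using component_verts[OF assms(5)] .
  have H'cl: "\<forall>u v. adj H u v \<longrightarrow> (u \<in> H' \<longleftrightarrow> v \<in> H')"
  proof (intro allI impI)
    fix u v assume a: "adj H u v"
    then have b: "adj H v u" using adj_sym by metis
    from wf_adj[OF wfH a] have "u \<in> verts H" "v \<in> verts H" by auto
    then show "u \<in> H' \<longleftrightarrow> v \<in> H'" using component_closed[OF assms(5)] a b by blast
  qed
  obtain S where S: "S \<subseteq> verts (delete H D)" "card S = oct (delete H D)" "bipartite (delete (delete H D) S)"
    using octE[OF wf_delete[OF wfH]] by blast
  obtain A where A: "\<forall>e\<in>edges (delete (delete H D) S). card (e\<inter>A) = 1"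
    using S(3) unfolding bipartite_def by blast
  have wf2: "\<forall>e\<in>edges (delete (delete H D) S). card e = 2 \<and> card (e\<inter>A) = 1"
    using A wfH unfolding wf_graph_def by auto
  have SD: "S \<inter> D = {}" "S \<subseteq> verts H" using S(1) by auto
  have finS: "finite S" using SD(2) finH finite_subset by blast
  have adj2: "\<And>u v. adj (delete (delete H D) S) u v \<longleftrightarrow> adj H u v \<and> u \<in> verts H - D - S \<and> v \<in> verts H - D - S"
    by auto
  have "oct H \<le> card S"
  proof (rule ccontr)
    assume lt: "\<not> oct H \<le> card S"
    have step1: "card (S \<inter> H') < card (XC \<inter> H')"
    proof (rule ccontr)
      assume ge: "\<not> card (S \<inter> H') < card (XC \<inter> H')"
      let ?S2 = "(S - H') \<union> (XC \<inter> H')"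
      have "card ?S2 \<le> card (S - H') + card (XC \<inter> H')" by (rule card_Un_le)
      also have "\<dots> \<le> card (S - H') + card (S \<inter> H')" using ge by simp
      also have "\<dots> = card S" using card_Diff_subset_Int[of S H'] card_mono[of S "S\<inter>H'"] finS by auto
      finally have c: "card ?S2 \<le> card S" .
      have "bipartite (delete H ?S2)"
        unfolding bipartite_def
      proof (intro exI[of _ "(A - H') \<union> (B \<inter> H')"] ballI)
        fix e assume e: "e \<in> edges (delete H ?S2)"
        then have eH: "e \<in> edges H" "e \<subseteq> verts H - ?S2" by auto
        obtain u v where uv: "e = {u,v}" "u\<noteq>v" using eH wfH card_2_iff unfolding wf_graph_def by metis
        have auv: "adj H u v" using eH uv unfolding adj_def by simp
        show "card (e \<inter> ((A - H') \<union> (B \<inter> H'))) = 1"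
        proof (cases "u \<in> H'")
          case True
          then have v: "v \<in> H'" using H'cl auv by blast
          then have "e \<in> edges (delete H XC)" using eH uv True by auto
          then have "card (e \<inter> B) = 1" using B by blast
          moreover have "e \<inter> ((A - H') \<union> (B \<inter> H')) = e \<inter> B" using uv True v by auto
          ultimately show ?thesis by simp
        next
          case False
          then have v: "v \<notin> H'" using H'cl auv by blast
          then have "e \<in> edges (delete (delete H D) S)" using eH uv False assms(6) by auto
          then have "card (e \<inter> A) = 1" using A by blast
          moreover have "e \<inter> ((A - H') \<union> (B \<inter> H')) = e \<inter> A" using uv False v by auto
          ultimately show ?thesis by simp
        qed
      qed
      moreover have "?S2 \<subseteq> verts H" using SD H'v by auto
      ultimately have "oct H \<le> card ?S2" by (intro octI)
      with c lt show False by simp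
    qed
    have zpos: "card (S \<inter> H') < z" using step1 compz assms(5) by (meson less_le_trans)
    have pigeon: "\<exists>D'\<in>K. D' \<inter> S \<inter> H' = {}"
      if K: "K \<subseteq> {D'. component (delete H XC) D'}" "z \<le> card K" for K
    proof (rule ccontr)
      assume nz: "\<not> (\<exists>D'\<in>K. D' \<inter> S \<inter> H' = {})"
      have finK: "finite K" using zpos K(2) card.infinite by force
      define f where "f D' = (SOME v. v \<in> D' \<inter> S \<inter> H')" for D'
      have fin: "f D' \<in> D' \<inter> S \<inter> H'" if "D' \<in> K" for D'
      proof -
        have "D' \<inter> S \<inter> H' \<noteq> {}" using nz that by auto
        then obtain v where "v \<in> D' \<inter> S \<inter> H'" by auto
        then show ?thesis unfolding f_def by (rule someI)
      qed
      have "inj_on f K"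
      proof (rule inj_onI)
        fix D1 D2 assume d: "D1 \<in> K" "D2 \<in> K" "f D1 = f D2"
        then have "D1 \<inter> D2 \<noteq> {}" using fin by (metis IntD1 disjoint_iff)
        then show "D1 = D2" using component_disj K(1) d by blast
      qed
      moreover have "f ` K \<subseteq> S \<inter> H'" using fin by blast
      ultimately have "card K \<le> card (S \<inter> H')" using card_inj_on_le finS by blast
      with K(2) zpos show False by simp
    qed
    have goodwalk: "successively (adj (delete (delete H D) S)) zs"
      if "successively (adj (induced H T)) zs" "set zs \<inter> S = {}" "set zs \<inter> D = {}" for T zs
      using that(1)
    proof (rule successively_mono)
      fix u v assume "u \<in> set zs" "v \<in> set zs" "adj (induced H T) u v"
      then show "adj (delete (delete H D) S) u v" using that wf_adj[OF wfH, of u v] by auto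
    qed
    have H'cl2: "\<forall>u v. adj (induced H T) u v \<longrightarrow> (u \<in> H' \<longleftrightarrow> v \<in> H')" for T
      using H'cl by simp
    have oddc: "\<not> has_odd_cycle (induced H ({x} \<union> D))" if x: "x \<in> XC \<inter> H'" "x \<notin> S" for x
    proof
      assume oc: "has_odd_cycle (induced H ({x} \<union> D))"
      let ?K = "{D'. component (delete H XC) D' \<and> D' \<noteq> D \<and> has_odd_cycle (induced H ({x} \<union> D'))}"
      have "z \<le> card ?K" using assms(7) x oc by blast
      then obtain D' where D': "D' \<in> ?K" "D' \<inter> S \<inter> H' = {}" using pigeon[of ?K] by blast
      then obtain zs where zs: "is_cycle (induced H ({x}\<union>D')) zs" "odd (length zs)"
        unfolding has_odd_cycle_def by blast
      have D'v: "D' \<subseteq> verts H - XC" using component_verts D' by fastforce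
      have D'D: "D' \<inter> D = {}" using component_disj D' assms(4) by blast
      have z1: "zs \<noteq> []" "set zs \<subseteq> verts H \<inter> ({x} \<union> D')"
        "successively (adj (induced H ({x}\<union>D'))) zs" "adj (induced H ({x}\<union>D')) (last zs) (hd zs)"
        using zs(1) unfolding is_cycle_def is_path_succ by auto
      show False
      proof (cases "x \<in> set zs")
        case True
        have "set zs \<subseteq> H'" using walk_closed[OF z1(3) H'cl2] True x by blast
        then have s: "set zs \<inter> S = {}" "set zs \<inter> D = {}" using z1(2) x D' D'D Dv by auto
        have w: "successively (adj (delete (delete H D) S)) zs" using goodwalk[OF z1(3) s] .
        have lh: "last zs \<in> set zs" "hd zs \<in> set zs" using z1(1) by auto
        have a1: "adj H (last zs) (hd zs)" using z1(4) by simp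
        have a2: "last zs \<notin> S" "hd zs \<notin> S" "last zs \<notin> D" "hd zs \<notin> D" using s lh by auto
        have a3: "last zs \<in> verts H" "hd zs \<in> verts H" using z1(2) lh by auto
        have "adj (delete (delete H D) S) (last zs) (hd zs)"
          unfolding adj2 using a1 a2 a3 by simp
        then show False using oddcyc_contra[OF w _ wf2 zs(2) z1(1)] by blast
      next
        case False
        then have sD: "set zs \<subseteq> D'" using z1(2) by auto
        have w: "successively (adj (delete H XC)) zs"
          using z1(3)
        proof (rule successively_mono)
          fix u v assume "u \<in> set zs" "v \<in> set zs" "adj (induced H ({x}\<union>D')) u v"
          then show "adj (delete H XC) u v" using sD D'v by auto
        qed
        have lh: "last zs \<in> set zs" "hd zs \<in> set zs" using z1(1) by auto
        have a1: "adj H (last zs) (hd zs)" using z1(4) by simp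
        have a3: "last zs \<in> verts H - XC" "hd zs \<in> verts H - XC" using sD D'v lh by auto
        have "adj (delete H XC) (last zs) (hd zs)"
          using a1 a3 by simp
        then show False using oddcyc_contra[OF w _ wf1 zs(2) z1(1)] by blast
      qed
    qed
    have pathc: "(x\<in>A \<longleftrightarrow> y\<in>A) \<longleftrightarrow> p = 0"
      if x: "x \<in> XC \<inter> H'" "y \<in> XC \<inter> H'" "x \<noteq> y" "x \<notin> S" "y \<notin> S" "p \<in> {0,1}"
        and hp: "has_path_parity (induced H ({x,y} \<union> D)) x y p" for x y p
    proof -
      let ?K = "{D'. component (delete H XC) D' \<and> D' \<noteq> D \<and> has_path_parity (induced H ({x,y} \<union> D')) x y p}"
      have "z \<le> card ?K" using assms(8) x hp by blast
      then obtain D' where D': "D' \<in> ?K" "D' \<inter> S \<inter> H' = {}" using pigeon[of ?K] by blast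
      then obtain ws where ws: "is_path (induced H ({x,y}\<union>D')) ws" "hd ws = x" "last ws = y"
        "(length ws - 1) mod 2 = p"
        unfolding has_path_parity_def by blast
      have D'D: "D' \<inter> D = {}" using component_disj D' assms(4) by blast
      have z1: "ws \<noteq> []" "set ws \<subseteq> verts H \<inter> ({x,y} \<union> D')"
        "successively (adj (induced H ({x,y}\<union>D'))) ws"
        using ws(1) unfolding is_path_succ by auto
      have "x \<in> set ws" using ws(2) z1(1) by auto
      then have "set ws \<subseteq> H'" using walk_closed[OF z1(3) H'cl2] x by blast
      then have s: "set ws \<inter> S = {}" "set ws \<inter> D = {}" using z1(2) x D' D'D Dv by auto
      have w: "successively (adj (delete (delete H D) S)) ws" using goodwalk[OF z1(3) s] .
      have "(hd ws \<in> A \<longleftrightarrow> last ws \<in> A) \<longleftrightarrow> even (length ws - 1)"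
        using walk_parity[OF w wf2 z1(1)] .
      then show ?thesis using ws(2-4) x(6) by auto
    qed
    define E where "E = {(x,d). x \<in> XC - S \<and> d \<in> D \<and> {x,d} \<in> edges H}"
    have Ep: "x \<in> XC \<inter> H' \<and> x \<notin> S \<and> d \<in> D \<and> adj H x d \<and> x \<in> verts H \<and> x \<notin> D"
      if "(x,d) \<in> E" for x d
    proof -
      have a: "adj H x d" "x \<in> XC - S" "d \<in> D" using that unfolding E_def adj_def by auto
      then have "x \<in> H'" using H'cl assms(6) by blast
      then show ?thesis using a wf_adj[OF wfH a(1)] Dv by auto
    qed
    have pathD: "\<exists>ys. ys \<noteq> [] \<and> hd ys = d0 \<and> last ys = d \<and> distinct ys \<and> set ys \<subseteq> D \<and>
        successively (adj H) ys \<and> ((d0\<in>B \<longleftrightarrow> d\<in>B) \<longleftrightarrow> even (length ys - 1))"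
      if "d0 \<in> D" "d \<in> D" for d0 d
    proof -
      let ?R = "\<lambda>u v. u \<in> verts (delete H XC) \<and> v \<in> verts (delete H XC) \<and> adj (delete H XC) u v"
      have DD: "D = {y. reach (delete H XC) d0 y}" using component_eq[OF assms(4) that(1)] .
      then have "?R\<^sup>*\<^sup>* d0 d" using that(2) unfolding reach_def by blast
      from dist_walk[OF this] obtain xs where xs: "xs \<noteq> []" "hd xs = d0" "last xs = d"
        "successively ?R xs" "distinct xs" "\<forall>v\<in>set xs. ?R\<^sup>*\<^sup>* d0 v" by blast
      have sD: "set xs \<subseteq> D" using xs(6) DD unfolding reach_def by blast
      have w1: "successively (adj (delete H XC)) xs" using xs(4) by (rule successively_mono; auto)
      have w: "successively (adj H) xs" using xs(4) by (rule successively_mono; auto)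
      have "(hd xs \<in> B \<longleftrightarrow> last xs \<in> B) \<longleftrightarrow> even (length xs - 1)"
        using walk_parity[OF w1 wf1 xs(1)] .
      then show ?thesis using xs sD w by (intro exI[of _ xs]; auto)
    qed
    have cons: "(x\<in>A \<longleftrightarrow> x0\<in>A) \<longleftrightarrow> (d\<in>B \<longleftrightarrow> d0\<in>B)"
      if e0: "(x0,d0) \<in> E" and e: "(x,d) \<in> E" for x0 d0 x d
    proof -
      note p0 = Ep[OF e0] and p1 = Ep[OF e]
      obtain ys where ys: "ys \<noteq> []" "hd ys = d0" "last ys = d" "distinct ys" "set ys \<subseteq> D"
        "successively (adj H) ys" "(d0\<in>B \<longleftrightarrow> d\<in>B) \<longleftrightarrow> even (length ys - 1)"
        using pathD[of d0 d] p0 p1 by blast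
      have sw: "successively (adj (induced H T)) ys" if "D \<subseteq> T" for T
        using ys(6) by (rule successively_mono; use ys(5) that in auto)
      show ?thesis
      proof (cases "x = x0")
        case True
        have "d\<in>B \<longleftrightarrow> d0\<in>B"
        proof (rule ccontr)
          assume ne: "\<not> (d\<in>B \<longleftrightarrow> d0\<in>B)"
          then have od: "odd (length ys - 1)" using ys(7) by blast
          then have ev1: "odd (length (x0 # ys))" using ys(1) by (cases ys; auto)
          have ev2: "length (x0#ys) \<ge> 3" using odd_pos[OF od] by simp
          note ev = ev1 ev2
          have "is_cycle (induced H ({x0} \<union> D)) (x0 # ys)"
            unfolding is_cycle_def is_path_succ
            using ys p0 p1 True sw[of "{x0} \<union> D"] Dv ev(2)
            by (auto simp: successively_Cons adj_sym)
          then have "has_odd_cycle (induced H ({x0} \<union> D))"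
            unfolding has_odd_cycle_def using ev(1) by blast
          then show False using oddc[of x0] p0 by blast
        qed
        then show ?thesis using True by simp
      next
        case False
        define p where "p = (length ys + 1) mod 2"
        have p01: "p \<in> {0,1}" unfolding p_def by auto
        have "is_path (induced H ({x0,x} \<union> D)) (x0 # ys @ [x])"
          unfolding is_path_succ
          using ys p0 p1 False sw[of "{x0,x} \<union> D"] Dv
          by (auto simp: successively_Cons successively_append_iff adj_sym)
        then have "has_path_parity (induced H ({x0,x} \<union> D)) x0 x p"
          unfolding has_path_parity_def p_def by (intro exI[of _ "x0 # ys @ [x]"]; auto)
        then have "(x0\<in>A \<longleftrightarrow> x\<in>A) \<longleftrightarrow> p = 0" using pathc[of x0 x p] p0 p1 False p01 by blast
        moreover have "p = 0 \<longleftrightarrow> even (length ys - 1)" unfolding p_def using ys(1) by (cases ys; auto)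
        ultimately show ?thesis using ys(7) by blast
      qed
    qed
    have "\<exists>f. \<forall>(x,d)\<in>E. (x\<in>A) \<noteq> ((d\<in>B) = f)"
    proof (cases "E = {}")
      case True then show ?thesis by blast
    next
      case False
      then obtain x0 d0 where e0: "(x0,d0) \<in> E" by auto
      have "\<forall>(x,d)\<in>E. (x\<in>A) \<noteq> ((d\<in>B) = ((x0\<in>A) \<noteq> (d0\<in>B)))"
      proof (intro ballI)
        fix p assume p: "p \<in> E"
        obtain x d where xd: "p = (x,d)" by (cases p)
        have "(x\<in>A \<longleftrightarrow> x0\<in>A) \<longleftrightarrow> (d\<in>B \<longleftrightarrow> d0\<in>B)" using cons[OF e0] p xd by simp
        then show "case p of (x,d) \<Rightarrow> (x\<in>A) \<noteq> ((d\<in>B) = ((x0\<in>A) \<noteq> (d0\<in>B)))" using xd by auto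
      qed
      then show ?thesis by (rule exI)
    qed
    then obtain f where f0: "\<forall>(x,d)\<in>E. (x\<in>A) \<noteq> ((d\<in>B) = f)" by (rule exE)
    have f: "(x\<in>A) \<noteq> ((d\<in>B) = f)" if "(x,d) \<in> E" for x d
      using bspec[OF f0 that] by simp
    define A' where "A' = (A - D) \<union> {d\<in>D. (d\<in>B) = f}"
    have mixed: "(u\<in>A') \<noteq> (v\<in>A')"
      if "{u,v} \<in> edges H" "u \<noteq> v" "u \<in> verts H - S" "v \<in> verts H - S" "u \<in> D" "v \<notin> D" for u v
    proof -
      have auv: "adj H u v" using that(1) unfolding adj_def .
      have "v \<in> XC"
      proof (rule ccontr)
        assume "v \<notin> XC"
        then have "adj (delete H XC) u v" "u \<in> verts (delete H XC)" "v \<in> verts (delete H XC)"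
          using auv that Dv by auto
        then have "v \<in> D" using component_closed[OF assms(4)] that(5) by blast
        with that(6) show False by blast
      qed
      then have "(v,u) \<in> E" unfolding E_def using that by (auto simp: insert_commute)
      from f[OF this] show ?thesis unfolding A'_def using that(5,6) by auto
    qed
    have "bipartite (delete H S)"
      unfolding bipartite_def
    proof (intro exI[of _ A'] ballI)
      fix e assume e: "e \<in> edges (delete H S)"
      then have eH: "e \<in> edges H" "e \<subseteq> verts H - S" by auto
      obtain u v where uv: "e = {u,v}" "u\<noteq>v" using eH wfH card_2_iff unfolding wf_graph_def by metis
      have "(u\<in>A') \<noteq> (v\<in>A')"
      proof (cases "u \<in> D"; cases "v \<in> D")
        assume a: "u \<in> D" "v \<in> D"
        then have "e \<in> edges (delete H XC)" using eH Dv uv by auto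
        then have "card (e \<inter> B) = 1" by (rule bspec[OF B])
        then have "(u\<in>B) \<noteq> (v\<in>B)" using two_color[OF uv(2)] uv(1) by simp
        then show ?thesis using a unfolding A'_def by auto
      next
        assume a: "u \<in> D" "v \<notin> D"
        have s1: "u \<in> verts H - S" "v \<in> verts H - S" using eH(2) uv(1) by auto
        have s2: "{u,v} \<in> edges H" using eH(1) uv(1) by simp
        show ?thesis by (rule mixed[OF s2 uv(2) s1 a])
      next
        assume a: "u \<notin> D" "v \<in> D"
        have s2: "{v,u} \<in> edges H" using eH(1) uv(1) by (simp add: insert_commute)
        have s1: "v \<in> verts H - S" "u \<in> verts H - S" using eH(2) uv(1) by auto
        have vu: "v \<noteq> u" using uv(2) by simp
        have "(v\<in>A') \<noteq> (u\<in>A')" by (rule mixed[OF s2 vu s1 a(2) a(1)])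
        then show ?thesis by auto
      next
        assume a: "u \<notin> D" "v \<notin> D"
        then have "e \<in> edges (delete (delete H D) S)" using eH uv by auto
        then have "card (e \<inter> A) = 1" by (rule bspec[OF A])
        then have "(u\<in>A) \<noteq> (v\<in>A)" using two_color[OF uv(2)] uv(1) by simp
        then show ?thesis using a unfolding A'_def by auto
      qed
      then show "card (e \<inter> A') = 1" using two_color[OF uv(2)] uv(1) by simp
    qed
    then have "oct H \<le> card S" using SD(2) by (intro octI)
    with lt show False by simp
  qed
  then have "oct H \<le> oct (delete H D)" using S(2) by simp
  moreover have "oct (delete H D) \<le> oct H" by (rule oct_mono[OF wfH])
  ultimately show ?thesis by simp
qed


end
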